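(* Let $u\in W$ and $\lambda\in P^\vee_+$ with $u\lambda\in P^\vee_-$, and suppose $\hat u=u\tau(-\lambda)$ satisfies $\hat uR_+\subset\hat R_+$. Let $\ell$ be such that $R_\ell\cong A_{k_\ell}$ and $h^\ell_\eta=(r_\ell+1)\hbar$. Let $w\in W$ and $\xi\in\Xi_{\vec r}(w)$, and put $m^\ell_0=(w\theta_\ell,\lambda)$, $m^\ell_j=(w\alpha^\ell_j,\lambda)$, $\xi^\ell_j=\xi(w\alpha^\ell_j)$ ($j=1,\dots,k_\ell$). Assume $|\xi|^w_\ell+m^\ell_0\le r_\ell+1$ and $\xi^\ell_j+m^\ell_j\ge0$ for all $j$. Let $\xi_\ell=\xi|_{wS_\ell}$. Then there exist $v_\ell\in W_\ell$ and a map $\tilde\xi_\ell:uwv_\ell S_\ell\to\mathbb Z_{\ge0}$ with $\sum_{\alpha\in uwv_\ell S_\ell}\tilde\xi_\ell(\alpha)\le r_\ell$ and $\tilde\xi_\ell^{-1}(0)\subset R_+$ such that $\hat u\,H_\eta(wS_\ell;\xi_\ell)=H_\eta(uwv_\ell S_\ell;\tilde\xi_\ell)$.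
   Context: $R$ is an irreducible reduced root system in $V=\mathbb C^n$, Weyl group $W$, positive roots $R_+$, simple roots $\Delta$, coweight lattice $P^\vee$ with dominant cone $P^\vee_+=\{\lambda:(\alpha,\lambda)\ge0\ \forall\alpha\in R_+\}$ and antidominant cone $P^\vee_-$. $\hbar\in\mathbb C\setminus\pi i\mathbb Q$, $\hbar\ne0$; $\tau(\lambda)x=x+\hbar\lambda$. Affine functions $[\alpha^{(1)},\alpha^{(0)}]:x\mapsto(\alpha^{(1)},x)+\alpha^{(0)}$; $\hat R=\{[\alpha,\hbar k]:\alpha\in R,k\in\mathbb Z\}$, $\hat R_+=R_+\cup\{[\alpha,\hbar k]:\alpha\in R,k>0\}$ (roots $\alpha\in R$ identified with $[\alpha,0]$); $W\ltimes\tau(P^\vee)$ acts on affine functions by $w\tau(\mu)[\alpha^{(1)},\alpha^{(0)}]=[w\alpha^{(1)},\alpha^{(0)}-\hbar(\alpha^{(1)},\mu)]$ and on $V$ by composition. $\eta:R\to\mathbb C$ is $W$-invariant. Fix $S_0\subset\Delta$; $R_0=\mathrm{span}(S_0)\cap R=\bigsqcup_{\ell=1}^mR_\ell$ irreducible components with Weyl groups $W_\ell$, $S_\ell=S_0\cap R_\ell=\{\alpha^\ell_1,\dots,\alpha^\ell_{k_\ell}\}$, $\theta_\ell$ the maximal root of $R_\ell$, $h^\ell_\eta=\eta_{\theta_\ell}+\sum_jn^\ell_j\eta_{\alpha^\ell_j}$ where $\theta_\ell=\sum_jn^\ell_j\alpha^\ell_j$. Fix $\vec r=(r_1,\dots,r_m)\in\mathbb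 Z_{\ge0}^m$. For $w\in W$, $\xi:wS_0\to\mathbb Z_{\ge0}$ let $|\xi|^w_\ell=\sum_{\alpha\in wS_\ell}\xi(\alpha)$ and $\Xi_{\vec r}(w)=\{\xi\mid\xi^{-1}(0)\subset R_+,\ |\xi|^w_\ell\le r_\ell\ \forall\ell\}$. For $S\subset R$ and $\xi:S\to\mathbb Z_{\ge0}$, $H_\eta(S;\xi)=\{x\in V:(\alpha,x)=\eta_\alpha-\hbar\xi(\alpha)\ \forall\alpha\in S\}$. *)

theory Defs
  imports "HOL-Analysis.Analysis"
begin

text \<open>V = complex^'n, with the standard complex-bilinear form (x,y) = sum_i x_i y_i.
  The roots live in the real form (real coordinates), where this form is the
  Euclidean inner product.\<close>

definition bil :: "complex^'n \<Rightarrow> complex^'n \<Rightarrow> complex" where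
  "bil x y = (\<Sum>i\<in>UNIV. x$i * y$i)"

definition is_real_vec :: "complex^'n \<Rightarrow> bool" where
  "is_real_vec x \<longleftrightarrow> (\<forall>i. Im (x$i) = 0)"

definition refl :: "complex^'n \<Rightarrow> complex^'n \<Rightarrow> complex^'n" where
  "refl a x = x - (2 * bil a x / bil a a) *s a"

definition root_system :: "(complex^'n) set \<Rightarrow> bool" where
  "root_system R \<longleftrightarrow> finite R \<and> 0 \<notin> R \<and> (\<forall>a\<in>R. is_real_vec a) \<and> vec.span R = UNIV \<and>
     (\<forall>a\<in>R. \<forall>b\<in>R. refl a b \<in> R) \<and> (\<forall>a\<in>R. \<forall>b\<in>R. 2 * bil a b / bil a a \<in> \<int>)"

definition reduced :: "(complex^'n) set \<Rightarrow> bool" where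
  "reduced R \<longleftrightarrow> (\<forall>a\<in>R. \<forall>c::complex. c *s a \<in> R \<longrightarrow> c = 1 \<or> c = -1)"

definition irreducible_roots :: "(complex^'n) set \<Rightarrow> bool" where
  "irreducible_roots R \<longleftrightarrow> R \<noteq> {} \<and>
     \<not> (\<exists>A B. A \<noteq> {} \<and> B \<noteq> {} \<and> A \<union> B = R \<and> A \<inter> B = {} \<and> (\<forall>a\<in>A. \<forall>b\<in>B. bil a b = 0))"

definition is_base :: "(complex^'n) set \<Rightarrow> (complex^'n) set \<Rightarrow> bool" where
  "is_base R D \<longleftrightarrow> D \<subseteq> R \<and> vec.independent D \<and>
     (\<forall>b\<in>R. \<exists>c :: complex^'n \<Rightarrow> int. b = (\<Sum>a\<in>D. of_int (c a) *s a) \<and>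
        ((\<forall>a\<in>D. c a \<ge> 0) \<or> (\<forall>a\<in>D. c a \<le> 0)))"

definition pos_roots :: "(complex^'n) set \<Rightarrow> (complex^'n) set \<Rightarrow> (complex^'n) set" where
  "pos_roots R D = {b\<in>R. \<exists>c :: complex^'n \<Rightarrow> nat. b = (\<Sum>a\<in>D. of_nat (c a) *s a)}"

inductive_set weyl :: "(complex^'n) set \<Rightarrow> (complex^'n \<Rightarrow> complex^'n) set" for R where
  weyl_id: "id \<in> weyl R"
| weyl_step: "w \<in> weyl R \<Longrightarrow> a \<in> R \<Longrightarrow> refl a \<circ> w \<in> weyl R"

definition coweights :: "(complex^'n) set \<Rightarrow> (complex^'n) set" where
  "coweights R = {x. \<forall>a\<in>R. bil a x \<in> \<int>}"

definition dominant :: "(complex^'n) set \<Rightarrow> (complex^'n) set \<Rightarrow> (complex^'n) set" where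
  "dominant R D = {x\<in>coweights R. \<forall>a\<in>pos_roots R D. Re (bil a x) \<ge> 0}"

definition antidominant :: "(complex^'n) set \<Rightarrow> (complex^'n) set \<Rightarrow> (complex^'n) set" where
  "antidominant R D = {x\<in>coweights R. \<forall>a\<in>pos_roots R D. Re (bil a x) \<le> 0}"

text \<open>Affine functions [a1,a0] are pairs (a1,a0). Positive affine roots.\<close>
definition Rhat_plus :: "(complex^'n) set \<Rightarrow> (complex^'n) set \<Rightarrow> complex
    \<Rightarrow> ((complex^'n) \<times> complex) set" where
  "Rhat_plus R D hb = {(a, 0) | a. a \<in> pos_roots R D} \<union>
     {(a, hb * of_int k) | a k. a \<in> R \<and> k > 0}"

text \<open>Action of w tau(mu) on affine functions and on V.\<close>
definition aff_act :: "complex \<Rightarrow> (complex^'n \<Rightarrow> complex^'n) \<Rightarrow> complex^'n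
    \<Rightarrow> (complex^'n) \<times> complex \<Rightarrow> (complex^'n) \<times> complex" where
  "aff_act hb w mu f = (w (fst f), snd f - hb * bil (fst f) mu)"

definition act_V :: "complex \<Rightarrow> (complex^'n \<Rightarrow> complex^'n) \<Rightarrow> complex^'n
    \<Rightarrow> complex^'n \<Rightarrow> complex^'n" where
  "act_V hb w mu x = w (x + hb *s mu)"

definition Hyp :: "(complex^'n \<Rightarrow> complex) \<Rightarrow> complex \<Rightarrow> (complex^'n) set
    \<Rightarrow> (complex^'n \<Rightarrow> nat) \<Rightarrow> (complex^'n) set" where
  "Hyp eta hb S xi = {x. \<forall>a\<in>S. bil a x = eta a - hb * of_nat (xi a)}"

definition irred_components :: "(complex^'n) set \<Rightarrow> nat \<Rightarrow> (nat \<Rightarrow> (complex^'n) set) \<Rightarrow> bool" where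
  "irred_components R0 m Rc \<longleftrightarrow> (\<Union>l\<in>{1..m}. Rc l) = R0 \<and>
     (\<forall>l\<in>{1..m}. irreducible_roots (Rc l)) \<and>
     (\<forall>l\<in>{1..m}. \<forall>l'\<in>{1..m}. l \<noteq> l' \<longrightarrow>
        Rc l \<inter> Rc l' = {} \<and> (\<forall>a\<in>Rc l. \<forall>b\<in>Rc l'. bil a b = 0))"

definition highest_root :: "(complex^'n) set \<Rightarrow> (complex^'n) set \<Rightarrow> complex^'n \<Rightarrow> bool" where
  "highest_root R D th \<longleftrightarrow> th \<in> R \<and>
     (\<forall>b\<in>R. \<exists>c :: complex^'n \<Rightarrow> nat. th - b = (\<Sum>a\<in>D. of_nat (c a) *s a))"

definition type_A :: "(complex^'n) set \<Rightarrow> nat \<Rightarrow> bool" where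
  "type_A D k \<longleftrightarrow> (\<exists>e :: nat \<Rightarrow> complex^'n. bij_betw e {1..k} D \<and>
     (\<forall>i\<in>{1..k}. \<forall>j\<in>{1..k}. 2 * bil (e i) (e j) / bil (e j) (e j) =
        (if i = j then 2 else if i = j + 1 \<or> j = i + 1 then -1 else 0)))"

text \<open>Xi_r(w): maps xi on w S0 (values outside w S0 irrelevant).\<close>
definition Xi :: "(complex^'n) set \<Rightarrow> (complex^'n) set \<Rightarrow> (complex^'n) set \<Rightarrow> nat
    \<Rightarrow> (nat \<Rightarrow> (complex^'n) set) \<Rightarrow> (nat \<Rightarrow> nat) \<Rightarrow> (complex^'n \<Rightarrow> complex^'n)
    \<Rightarrow> (complex^'n \<Rightarrow> nat) set" where
  "Xi R D S0 m Rc r w = {xi. {a \<in> w ` S0. xi a = 0} \<subseteq> pos_roots R D \<and>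
     (\<forall>l\<in>{1..m}. (\<Sum>a\<in>w ` (S0 \<inter> Rc l). xi a) \<le> r l)}"

end

theory Submission
  imports Defs
begin


type_synonym 'n V = "complex^'n"

lemma bil_sym: "bil x y = bil y x"
  by (simp add: bil_def mult.commute)
lemma bil_add_l: "bil (x + y) z = bil x z + bil y z"
  by (simp add: bil_def sum.distrib algebra_simps)
lemma bil_add_r: "bil z (x + y) = bil z x + bil z y"
  by (simp add: bil_def sum.distrib algebra_simps)
lemma bil_diff_l: "bil (x - y) z = bil x z - bil y z"
  by (simp add: bil_def sum_subtractf algebra_simps)
lemma bil_diff_r: "bil z (x - y) = bil z x - bil z y"
  by (simp add: bil_def sum_subtractf algebra_simps)
lemma bil_neg_l: "bil (- x) z = - bil x z"
  by (simp add: bil_def sum_negf)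
lemma bil_neg_r: "bil z (- x) = - bil z x"
  by (simp add: bil_def sum_negf)
lemma bil_smult_l: "bil (c *s x) y = c * bil x y"
  by (simp add: bil_def sum_distrib_left mult.assoc)
lemma bil_smult_r: "bil y (c *s x) = c * bil y x"
  by (simp add: bil_def sum_distrib_left algebra_simps)
lemma bil_sum_l: "bil (\<Sum>a\<in>A. f a) y = (\<Sum>a\<in>A. bil (f a) y)"
  by (simp add: bil_def sum_distrib_right sum.swap[of _ UNIV])
lemma bil_sum_r: "bil y (\<Sum>a\<in>A. f a) = (\<Sum>a\<in>A. bil y (f a))"
  by (simp add: bil_def sum_distrib_left sum.swap[of _ UNIV])
lemma bil_zero_l[simp]: "bil 0 y = 0" by (simp add: bil_def)
lemma bil_zero_r[simp]: "bil y 0 = 0" by (simp add: bil_def)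

lemmas bil_simps = bil_add_l bil_add_r bil_diff_l bil_diff_r bil_neg_l bil_neg_r
  bil_smult_l bil_smult_r bil_sum_l bil_sum_r

lemma bil_self_real:
  assumes "is_real_vec a" "a \<noteq> 0"
  shows "bil a a = complex_of_real (\<Sum>i\<in>UNIV. (Re (a$i))^2)" "(\<Sum>i\<in>UNIV. (Re (a$i))^2) > 0"
proof -
  have c: "a$i = complex_of_real (Re (a$i))" for i
    using assms(1) unfolding is_real_vec_def by (simp add: complex_eq_iff)
  show "bil a a = complex_of_real (\<Sum>i\<in>UNIV. (Re (a$i))^2)"
    unfolding bil_def by (subst c, subst c) (simp add: power2_eq_square)
  obtain j where "a$j \<noteq> 0" using assms(2) by (metis vec_eq_iff zero_index)
  then have "Re (a$j) \<noteq> 0" using c by (metis of_real_0)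
  then have "(Re (a$j))^2 > 0" by simp
  moreover have "(Re (a$j))^2 \<le> (\<Sum>i\<in>UNIV. (Re (a$i))^2)"
    by (rule member_le_sum) auto
  ultimately show "(\<Sum>i\<in>UNIV. (Re (a$i))^2) > 0" by linarith
qed

lemma bil_self_nz: "is_real_vec a \<Longrightarrow> a \<noteq> 0 \<Longrightarrow> bil a a \<noteq> 0"
  using bil_self_real by (metis less_irrefl of_real_eq_0_iff)

lemma refl_add: "refl a (x + y) = refl a x + refl a y"
  by (simp add: refl_def bil_simps add_divide_distrib vector_sadd_rdistrib)
lemma refl_smult: "refl a (c *s x) = c *s refl a x"
  by (simp add: refl_def bil_simps vector_ssub_ldistrib vector_smult_assoc)
lemma refl_neg: "refl a (- x) = - refl a x"
  by (simp add: refl_def bil_simps vector_smult_lneg)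
lemma refl_bil: assumes "bil a a \<noteq> 0" shows "bil (refl a x) (refl a y) = bil x y"
  using assms by (simp add: refl_def bil_simps bil_sym[of x a] bil_sym[of y a] field_simps)
lemma refl_refl: assumes "bil a a \<noteq> 0" shows "refl a (refl a x) = x"
proof -
  have "refl a (refl a x) = x - (2 * bil a x / bil a a) *s a - (2 * (bil a x - (2 * bil a x / bil a a) * bil a a) / bil a a) *s a"
    by (simp add: refl_def bil_simps)
  also have "\<dots> = x" using assms by (simp add: field_simps vector_sadd_rdistrib[symmetric])
  finally show ?thesis .
qed

lemma rs_good: "root_system R \<Longrightarrow> a \<in> R \<Longrightarrow> bil a a \<noteq> 0"
  unfolding root_system_def by (metis bil_self_nz)

lemma weyl_add: "w \<in> weyl R \<Longrightarrow> w (x + y) = w x + w y"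
  by (induction arbitrary: x y rule: weyl.induct) (auto simp: refl_add)
lemma weyl_smult: "w \<in> weyl R \<Longrightarrow> w (c *s x) = c *s w x"
  by (induction arbitrary: x rule: weyl.induct) (auto simp: refl_smult)
lemma weyl_neg: "w \<in> weyl R \<Longrightarrow> w (- x) = - w x"
  by (induction arbitrary: x rule: weyl.induct) (auto simp: refl_neg)
lemma weyl_diff: "w \<in> weyl R \<Longrightarrow> w (x - y) = w x - w y"
  by (metis diff_conv_add_uminus weyl_add weyl_neg)
lemma weyl_zero: "w \<in> weyl R \<Longrightarrow> w 0 = 0"
  by (metis diff_self weyl_diff)
lemma weyl_sum: "w \<in> weyl R \<Longrightarrow> w (\<Sum>a\<in>A. f a) = (\<Sum>a\<in>A. w (f a))"
proof (induction A rule: infinite_finite_induct)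
  case (infinite A) then show ?case by (simp add: weyl_zero)
next
  case empty then show ?case by (simp add: weyl_zero)
next
  case (insert x F) then show ?case by (simp add: weyl_add)
qed
lemma weyl_bil: "w \<in> weyl R \<Longrightarrow> \<forall>a\<in>R. bil a a \<noteq> 0 \<Longrightarrow> bil (w x) (w y) = bil x y"
  by (induction arbitrary: x y rule: weyl.induct) (auto simp: refl_bil)
lemma weyl_bij: "w \<in> weyl R \<Longrightarrow> \<forall>a\<in>R. bil a a \<noteq> 0 \<Longrightarrow> bij w"
proof (induction rule: weyl.induct)
  case weyl_id then show ?case by (simp add: bij_def inj_on_def)
next
  case (weyl_step w a)
  have "bil a a \<noteq> 0" using weyl_step by blast
  then have "bij (refl a)" by (intro o_bij[of "refl a"]) (auto simp: fun_eq_iff refl_refl)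
  then show ?case using weyl_step bij_comp by blast
qed
lemma weyl_closed: "w \<in> weyl R \<Longrightarrow> \<forall>a\<in>R. \<forall>b\<in>R. refl a b \<in> R \<Longrightarrow> b \<in> R \<Longrightarrow> w b \<in> R"
  by (induction arbitrary: b rule: weyl.induct) auto
lemma weyl_mono: "w \<in> weyl R' \<Longrightarrow> R' \<subseteq> R \<Longrightarrow> w \<in> weyl R"
  by (induction rule: weyl.induct) (auto intro: weyl.intros)
lemma weyl_comp: "w1 \<in> weyl R \<Longrightarrow> w2 \<in> weyl R \<Longrightarrow> w1 \<circ> w2 \<in> weyl R"
  by (induction rule: weyl.induct) (auto simp: comp_assoc intro: weyl.intros)
lemma weyl_pow: "w \<in> weyl R \<Longrightarrow> w ^^ p \<in> weyl R"
  by (induction p) (auto simp: weyl_comp weyl_id[unfolded id_def] intro: weyl.intros)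

lemma indep_coeffs:
  assumes "vec.independent A" "(\<Sum>a\<in>A. g a *s a) = (\<Sum>a\<in>A. h a *s a)" "x \<in> A"
  shows "g x = h x"
proof -
  have fin: "finite A" using assms(1) vec.independent_explicit by blast
  have h1: "(\<Sum>a\<in>A. (g a - h a) *s a) = 0"
    using assms(2) by (simp add: vector_sub_rdistrib sum_subtractf)
  have h2: "\<forall>c. (\<Sum>v\<in>A. c v *s v) = 0 \<longrightarrow> (\<forall>v\<in>A. c v = 0)"
    using assms(1) vec.independent_explicit[of A] by blast
  have "g x - h x = 0" using h2[rule_format, of "\<lambda>a. g a - h a"] h1 assms(3) by simp
  then show ?thesis by simp
qed



lemma refl_self: "bil b b \<noteq> 0 \<Longrightarrow> refl b b = - b"
proof -
  assume h: "bil b b \<noteq> 0"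
  have "refl b b = b - 2 *s b" using h by (simp add: refl_def)
  also have "\<dots> = -b" by (simp add: vec_eq_iff)
  finally show ?thesis .
qed

lemma rs_neg: "root_system R \<Longrightarrow> b \<in> R \<Longrightarrow> - b \<in> R"
  by (metis refl_self root_system_def rs_good)

lemma not_pos_neg:
  fixes R D :: "(complex^'n) set"
  assumes rs: "root_system R" and base: "is_base R D" and b: "b \<in> R" "b \<notin> pos_roots R D"
  shows "- b \<in> pos_roots R D"
proof -
  obtain c :: "complex^'n \<Rightarrow> int" where c: "b = (\<Sum>a\<in>D. of_int (c a) *s a)"
    "(\<forall>a\<in>D. c a \<ge> 0) \<or> (\<forall>a\<in>D. c a \<le> 0)"
    using base b unfolding is_base_def by blast
  show ?thesis
  proof (cases "\<forall>a\<in>D. c a \<ge> 0")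
    case True
    have "b = (\<Sum>a\<in>D. of_nat (nat (c a)) *s a)"
      unfolding c(1) by (rule sum.cong) (use True in simp_all)
    then have "b \<in> pos_roots R D" using b(1) unfolding pos_roots_def
      by (auto intro!: exI[of _ "\<lambda>a. nat (c a)"])
    then show ?thesis using b by blast
  next
    case False
    then have F: "\<forall>a\<in>D. c a \<le> 0" using c(2) by blast
    have "- b = (\<Sum>a\<in>D. of_nat (nat (- c a)) *s a)"
      unfolding c(1) sum_negf[symmetric]
    proof (rule sum.cong)
      fix a assume "a \<in> D"
      then have "of_nat (nat (- c a)) = - (of_int (c a) :: complex)" using F by simp
      then show "- (of_int (c a) *s a) = of_nat (nat (- c a)) *s a" by (simp add: vector_smult_lneg)
    qed simp
    then show ?thesis using rs_neg[OF rs b(1)] unfolding pos_roots_def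
      by (auto intro!: exI[of _ "\<lambda>a. nat (- c a)"])
  qed
qed

definition Cart :: "nat \<Rightarrow> nat \<Rightarrow> int" where
  "Cart i j = (if i = j then 2 else if i = j + 1 \<or> j = i + 1 then -1 else 0)"


fun Qf :: "(nat \<Rightarrow> nat) \<Rightarrow> nat \<Rightarrow> real" where
  "Qf N 0 = 0"
| "Qf N (Suc m) = Qf N m - (if m \<ge> 1 then real (N m) * real (N (Suc m)) else 0) + (real (N (Suc m)))^2"

lemma Qf_D:
  assumes "m \<ge> 1"
  shows "Qf N m - ((real (N m))^2 + 1)/2 = ((real (N 1))^2 - 1)/2 + (\<Sum>i\<in>{1..<m}. (real (N i) - real (N (Suc i)))^2/2)"
  using assms
proof (induction m)
  case 0 then show ?case by simp
next
  case (Suc m)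
  show ?case
  proof (cases "m = 0")
    case True then show ?thesis by (simp add: field_simps)
  next
    case False
    then have "m \<ge> 1" by simp
    from Suc.IH[OF this] have ih: "Qf N m - ((real (N m))^2 + 1)/2 = ((real (N 1))^2 - 1)/2 + (\<Sum>i\<in>{1..<m}. (real (N i) - real (N (Suc i)))^2/2)" by blast
    have "(\<Sum>i\<in>{1..<Suc m}. (real (N i) - real (N (Suc i)))^2/2) = (\<Sum>i\<in>{1..<m}. (real (N i) - real (N (Suc i)))^2/2) + (real (N m) - real (N (Suc m)))^2/2"
      using \<open>m \<ge> 1\<close> by simp
    moreover have "Qf N (Suc m) = Qf N m - real (N m) * real (N (Suc m)) + (real (N (Suc m)))^2"
      using \<open>m \<ge> 1\<close> by simp
    moreover have "(real (N m) - real (N (Suc m)))^2 = (real (N m))^2 - 2 * (real (N m) * real (N (Suc m))) + (real (N (Suc m)))^2"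
      by (simp add: power2_diff)
    ultimately show ?thesis using ih by argo
  qed
qed

lemma Qf_one:
  assumes k1: "k \<ge> 1" and N1: "\<forall>i\<in>{1..k}. N i \<ge> 1" and Q: "Qf N k = 1"
  shows "\<forall>i\<in>{1..k}. N i = 1"
proof -
  have D: "Qf N k - ((real (N k))^2 + 1)/2 = ((real (N 1))^2 - 1)/2 + (\<Sum>i\<in>{1..<k}. (real (N i) - real (N (Suc i)))^2/2)"
    using Qf_D[OF k1] .
  have nk: "real (N k) \<ge> 1" "real (N 1) \<ge> 1" using N1 k1 by auto
  have "(real (N k))^2 \<ge> 1" "(real (N 1))^2 \<ge> 1" using nk by (simp_all add: one_le_power)
  moreover have s0: "(\<Sum>i\<in>{1..<k}. (real (N i) - real (N (Suc i)))^2/2) \<ge> 0" by (intro sum_nonneg) simp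
  ultimately have "(\<Sum>i\<in>{1..<k}. (real (N i) - real (N (Suc i)))^2/2) \<le> 0"
    using D Q by argo
  then have z: "(\<Sum>i\<in>{1..<k}. (real (N i) - real (N (Suc i)))^2/2) = 0" using s0 by linarith
  have n1sq: "(real (N 1))^2 = 1" using D Q z \<open>(real (N k))^2 \<ge> 1\<close> \<open>(real (N 1))^2 \<ge> 1\<close> s0 by argo
  from n1sq have "real (N 1) = 1 \<or> real (N 1) = -1" by (simp only: power2_eq_1_iff)
  then have n1: "N 1 = 1" by auto
  have eq: "N i = N (Suc i)" if "i \<in> {1..<k}" for i
  proof -
    have "(real (N i) - real (N (Suc i)))^2/2 = 0"
      using z sum_nonneg_eq_0_iff[of "{1..<k}" "\<lambda>i. (real (N i) - real (N (Suc i)))^2/2"] that by simp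
    then show ?thesis by simp
  qed
  show ?thesis
  proof
    fix i assume "i \<in> {1..k}"
    then show "N i = 1"
    proof (induction i)
      case 0 then show ?case by simp
    next
      case (Suc i) then show ?case using eq[of i] n1 by (cases "i = 0") auto
    qed
  qed
qed

locale tA =
  fixes R D S :: "(complex^'n) set" and e :: "nat \<Rightarrow> complex^'n" and k :: nat
  assumes rs: "root_system R" and red: "reduced R" and base: "is_base R D" and SD: "S \<subseteq> D"
    and eb: "bij_betw e {1..k} S" and k1: "k \<ge> 1"
    and cart: "\<forall>i\<in>{1..k}. \<forall>j\<in>{1..k}. 2 * bil (e i) (e j) / bil (e j) (e j) =
        (if i = j then 2 else if i = j + 1 \<or> j = i + 1 then -1 else 0)"
begin

lemma DR: "D \<subseteq> R" using base unfolding is_base_def by blast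
lemma SR: "S \<subseteq> R" using SD DR by blast
lemma eS: "i \<in> {1..k} \<Longrightarrow> e i \<in> S" using eb bij_betwE by blast
lemma eR: "i \<in> {1..k} \<Longrightarrow> e i \<in> R" using eS SR by blast
lemma e_inj: "inj_on e {1..k}" using eb by (simp add: bij_betw_def)
lemma e_img: "e ` {1..k} = S" using eb by (simp add: bij_betw_def)
lemma e_eq: "i \<in> {1..k} \<Longrightarrow> j \<in> {1..k} \<Longrightarrow> e i = e j \<longleftrightarrow> i = j"
  by (rule inj_on_eq_iff[OF e_inj])
lemma good: "a \<in> R \<Longrightarrow> bil a a \<noteq> 0" by (rule rs_good[OF rs])
lemma indD: "vec.independent D" using base unfolding is_base_def by blast
lemma finD: "finite D" by (rule vec.independent_explicit[THEN iffD1, THEN conjunct1, OF indD])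
lemma finS: "finite S" by (rule finite_subset[OF SD finD])
lemma indS: "vec.independent S" by (rule vec.independent_mono[OF indD SD])

lemma reindex: "(\<Sum>a\<in>S. G a) = (\<Sum>i\<in>{1..k}. G (e i))"
  unfolding e_img[symmetric] by (rule sum.reindex[OF e_inj, unfolded comp_def])

lemma inv_e: "i \<in> {1..k} \<Longrightarrow> inv_into {1..k} e (e i) = i"
  using e_inj by (simp add: inv_into_f_f)
lemma inv_e'[simp]: "Suc 0 \<le> i \<Longrightarrow> i \<le> k \<Longrightarrow> inv_into {Suc 0..k} e (e i) = i"
  using inv_e by simp

lemma indep_idx:
  assumes "(\<Sum>i\<in>{1..k}. g i *s e i) = (\<Sum>i\<in>{1..k}. h i *s e i)" "i \<in> {1..k}"
  shows "g i = h i"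
proof -
  let ?g = "\<lambda>a. g (inv_into {1..k} e a)" and ?h = "\<lambda>a. h (inv_into {1..k} e a)"
  have "(\<Sum>a\<in>S. ?g a *s a) = (\<Sum>a\<in>S. ?h a *s a)"
    unfolding reindex using assms(1) by (simp add: inv_e)
  from indep_coeffs[OF indS this eS[OF assms(2)]] show ?thesis by (simp only: inv_e assms(2))
qed

lemma sign_idx:
  assumes "b \<in> R" "b = (\<Sum>i\<in>{1..k}. of_int (f i) *s e i)"
  shows "(\<forall>i\<in>{1..k}. f i \<ge> 0) \<or> (\<forall>i\<in>{1..k}. f i \<le> 0)"
proof -
  obtain c :: "complex^'n \<Rightarrow> int" where c: "b = (\<Sum>a\<in>D. of_int (c a) *s a)"
    "(\<forall>a\<in>D. c a \<ge> 0) \<or> (\<forall>a\<in>D. c a \<le> 0)"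
    using base assms(1) unfolding is_base_def by blast
  define F where "F a = (if a \<in> S then (of_int (f (inv_into {1..k} e a)) :: complex) else 0)" for a
  have "(\<Sum>a\<in>D. F a *s a) = (\<Sum>a\<in>S. F a *s a)"
    by (rule sum.mono_neutral_right) (use finD SD in \<open>auto simp: F_def\<close>)
  also have "\<dots> = (\<Sum>i\<in>{1..k}. of_int (f i) *s e i)"
    unfolding reindex by (rule sum.cong) (auto simp: F_def eS inv_e)
  finally have "(\<Sum>a\<in>D. (of_int (c a) :: complex) *s a) = (\<Sum>a\<in>D. F a *s a)"
    using assms(2) c(1) by simp
  then have cc: "of_int (c a) = F a" if "a \<in> D" for a by (rule indep_coeffs[OF indD _ that])
  have "c (e i) = f i" if "i \<in> {1..k}" for i
    using cc[of "e i"] eS[OF that] SD inv_e[OF that] by (auto simp: F_def)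
  then show ?thesis using c(2) eS SD by (metis subsetD)
qed


definition "cc = bil (e 1) (e 1)"

lemma diag_step:
  assumes "1 \<le> i" "i + 1 \<le> k"
  shows "bil (e (i+1)) (e (i+1)) = bil (e i) (e i)"
proof -
  have i: "i \<in> {1..k}" "i+1 \<in> {1..k}" using assms by auto
  have n1: "bil (e i) (e i) \<noteq> 0" "bil (e (i+1)) (e (i+1)) \<noteq> 0" using good eR i by auto
  have "2 * bil (e i) (e (i+1)) / bil (e (i+1)) (e (i+1)) = -1" using cart i by force
  then have a: "bil (e (i+1)) (e (i+1)) = - 2 * bil (e i) (e (i+1))" using n1 by (simp add: field_simps)
  have "2 * bil (e (i+1)) (e i) / bil (e i) (e i) = -1" using cart i by force
  then have b: "bil (e i) (e i) = - 2 * bil (e (i+1)) (e i)" using n1 by (simp add: field_simps)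
  show ?thesis unfolding a b bil_sym[of "e (i+1)" "e i"] ..
qed

lemma diag: "i \<in> {1..k} \<Longrightarrow> bil (e i) (e i) = cc"
proof (induction i)
  case 0 then show ?case by simp
next
  case (Suc i)
  show ?case
  proof (cases "i = 0")
    case True then show ?thesis by (simp add: cc_def)
  next
    case False
    then have "bil (e (i+1)) (e (i+1)) = bil (e i) (e i)" using diag_step Suc.prems by simp
    then show ?thesis using Suc False by simp
  qed
qed

lemma cc_real: obtains c0 where "cc = complex_of_real c0" "c0 > 0"
proof -
  have "e 1 \<in> R" using eR k1 by simp
  then have "is_real_vec (e 1)" "e 1 \<noteq> 0" using rs unfolding root_system_def by auto
  from bil_self_real[OF this] show ?thesis using that unfolding cc_def by blast
qed

lemma cc_nz: "cc \<noteq> 0" using diag good eR k1 by (metis atLeastAtMost_iff le_refl)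

lemma bil_ee: "i \<in> {1..k} \<Longrightarrow> j \<in> {1..k} \<Longrightarrow> bil (e i) (e j) = of_int (Cart i j) * cc / 2"
proof -
  assume ij: "i \<in> {1..k}" "j \<in> {1..k}"
  have "2 * bil (e i) (e j) / bil (e j) (e j) = (if i = j then 2 else if i = j + 1 \<or> j = i + 1 then -1 else 0)"
    using cart ij by blast
  then have "2 * bil (e i) (e j) / cc = of_int (Cart i j)"
    unfolding diag[OF ij(2)] by (simp add: Cart_def)
  then show ?thesis using cc_nz by (simp add: field_simps)
qed

lemma refl_ee: "i \<in> {1..k} \<Longrightarrow> j \<in> {1..k} \<Longrightarrow> refl (e i) (e j) = e j - of_int (Cart i j) *s e i"
proof -
  assume ij: "i \<in> {1..k}" "j \<in> {1..k}"
  have "2 * bil (e i) (e j) / bil (e i) (e i) = of_int (Cart i j)"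
    unfolding bil_ee[OF ij] diag[OF ij(1)] using cc_nz by simp
  then show ?thesis unfolding refl_def by simp
qed


definition "c0 = Re cc"
lemma cc_c0: "cc = complex_of_real c0" and c0_pos: "c0 > 0"
  using cc_real unfolding c0_def by (metis Re_complex_of_real)+

lemma bil_e_comb:
  assumes "j \<in> {1..k}"
  shows "bil (e j) (\<Sum>i\<in>{1..k}. of_nat (N i) *s e i)
     = complex_of_real (\<Sum>i\<in>{1..k}. real (N i) * real_of_int (Cart j i) * c0 / 2)"
  unfolding bil_sum_r bil_smult_r of_real_sum
  by (rule sum.cong) (use assms in \<open>auto simp: bil_ee cc_c0\<close>)


lemma len:
  "\<And>\<beta> N. \<beta> \<in> R \<Longrightarrow> \<beta> = (\<Sum>i\<in>{1..k}. of_nat (N i) *s e i) \<Longrightarrow> H = (\<Sum>i\<in>{1..k}. N i) \<Longrightarrow> bil \<beta> \<beta> = cc"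
proof (induction H rule: less_induct)
  case (less H \<beta> N)
  define r where "r j = (\<Sum>i\<in>{1..k}. real (N i) * real_of_int (Cart j i) * c0 / 2)" for j
  have bj: "bil (e j) \<beta> = complex_of_real (r j)" if "j \<in> {1..k}" for j
    unfolding less.prems(2) r_def by (rule bil_e_comb[OF that])
  have "bil \<beta> \<beta> = (\<Sum>j\<in>{1..k}. of_nat (N j) * bil (e j) \<beta>)"
    by (subst (1) less.prems(2)) (simp add: bil_simps)
  also have "\<dots> = complex_of_real (\<Sum>j\<in>{1..k}. real (N j) * r j)"
    unfolding of_real_sum by (rule sum.cong) (auto simp: bj)
  finally have bb: "bil \<beta> \<beta> = complex_of_real (\<Sum>j\<in>{1..k}. real (N j) * r j)" .
  have "is_real_vec \<beta>" "\<beta> \<noteq> 0" using less.prems(1) rs unfolding root_system_def by auto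
  from bil_self_real[OF this] bb have pos: "(\<Sum>j\<in>{1..k}. real (N j) * r j) > 0"
    by (metis of_real_eq_iff)
  obtain j where j: "j \<in> {1..k}" "N j > 0" "r j > 0"
  proof (rule ccontr)
    assume "\<not> thesis"
    have "\<forall>j\<in>{1..k}. real (N j) * r j \<le> 0"
    proof
      fix j assume jj: "j \<in> {1..k}"
      show "real (N j) * r j \<le> 0"
      proof (cases "N j = 0")
        case True then show ?thesis by simp
      next
        case False
        then have "\<not> r j > 0" using that jj \<open>\<not> thesis\<close> by blast
        then show ?thesis by (simp add: mult_nonneg_nonpos)
      qed
    qed
    then have "(\<Sum>j\<in>{1..k}. real (N j) * r j) \<le> 0" by (intro sum_nonpos) blast
    then show False using pos by simp
  qed
  have "2 * bil (e j) \<beta> / bil (e j) (e j) \<in> \<int>"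
    using rs eR[OF j(1)] less.prems(1) unfolding root_system_def by blast
  then obtain z where z: "2 * bil (e j) \<beta> / bil (e j) (e j) = of_int z" by (metis Ints_cases)
  have zr: "real_of_int z = 2 * r j / c0"
  proof -
    have "complex_of_int z = complex_of_real (2 * r j / c0)"
      using z[symmetric] unfolding bj[OF j(1)] diag[OF j(1)] cc_c0 by simp
    then show ?thesis by (metis of_real_eq_iff of_real_of_int_eq)
  qed
  have "real_of_int z > 0" unfolding zr using j(3) c0_pos by simp
  then have zpos: "z > 0" by simp
  define N' where "N' i = int (N i) - (if i = j then z else 0)" for i
  have rb: "refl (e j) \<beta> = \<beta> - of_int z *s e j" unfolding refl_def z ..
  have rbR: "refl (e j) \<beta> \<in> R" using rs eR[OF j(1)] less.prems(1) unfolding root_system_def by blast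
  have "(\<Sum>i\<in>{1..k}. (if i = j then (of_int z :: complex) else 0) *s e i) = (\<Sum>i\<in>{1..k}. if i = j then of_int z *s e i else 0)"
    by (rule sum.cong) auto
  also have "\<dots> = of_int z *s e j" using j(1) by (simp only: sum.delta finite_atLeastAtMost if_True)
  finally have dsum: "(\<Sum>i\<in>{1..k}. (if i = j then (of_int z :: complex) else 0) *s e i) = of_int z *s e j" .
  have rbsum: "refl (e j) \<beta> = (\<Sum>i\<in>{1..k}. of_int (N' i) *s e i)"
  proof -
    have "(\<Sum>i\<in>{1..k}. of_int (N' i) *s e i) = (\<Sum>i\<in>{1..k}. of_nat (N i) *s e i - (if i = j then (of_int z :: complex) else 0) *s e i)"
      by (rule sum.cong) (auto simp: N'_def vector_sub_rdistrib)
    also have "\<dots> = \<beta> - of_int z *s e j" unfolding sum_subtractf dsum less.prems(2) ..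
    finally show ?thesis unfolding rb ..
  qed
  show ?case
  proof (cases "\<exists>i\<in>{1..k}. i \<noteq> j \<and> N i > 0")
    case True
    then obtain i where i: "i \<in> {1..k}" "i \<noteq> j" "N i > 0" by blast
    have "N' i > 0" using i by (simp add: N'_def)
    then have nn: "\<forall>i\<in>{1..k}. N' i \<ge> 0" using sign_idx[OF rbR rbsum] i(1) by force
    define N2 where "N2 i = nat (N' i)" for i
    have rb2: "refl (e j) \<beta> = (\<Sum>i\<in>{1..k}. of_nat (N2 i) *s e i)"
      unfolding rbsum by (rule sum.cong) (use nn in \<open>auto simp: N2_def\<close>)
    have "int (\<Sum>i\<in>{1..k}. N2 i) = (\<Sum>i\<in>{1..k}. N' i)"
      unfolding of_nat_sum by (rule sum.cong) (use nn in \<open>auto simp: N2_def\<close>)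
    also have "\<dots> = (\<Sum>i\<in>{1..k}. int (N i)) - (\<Sum>i\<in>{1..k}. (if i = j then z else 0))"
      unfolding N'_def sum_subtractf ..
    also have "\<dots> = int H - z" using j(1) less.prems(3) by (simp add: sum.delta')
    finally have "(\<Sum>i\<in>{1..k}. N2 i) < H" using zpos by linarith
    from less.IH[OF this rbR rb2 refl] have "bil (refl (e j) \<beta>) (refl (e j) \<beta>) = cc" .
    then show ?thesis using refl_bil good eR[OF j(1)] by metis
  next
    case False
    have "\<beta> = (\<Sum>i\<in>{1..k}. (if i = j then of_nat (N j) else 0) *s e i)"
      unfolding less.prems(2) by (rule sum.cong) (use False in auto)
    also have "\<dots> = (\<Sum>i\<in>{1..k}. if i = j then of_nat (N j) *s e i else 0)"
      by (rule sum.cong) auto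
    also have "\<dots> = of_nat (N j) *s e j" using j(1) by (simp only: sum.delta finite_atLeastAtMost if_True)
    finally have bN: "\<beta> = of_nat (N j) *s e j" .
    have "(of_nat (N j) :: complex) = 1 \<or> of_nat (N j) = (-1 :: complex)"
      using red eR[OF j(1)] less.prems(1) bN unfolding reduced_def by blast
    then have "N j = 1"
    proof (elim disjE)
      assume "(of_nat (N j)::complex) = 1" then show ?thesis by (metis of_nat_1 of_nat_eq_iff)
    next
      assume "(of_nat (N j)::complex) = -1"
      then have "Re (of_nat (N j)) = -1" by simp
      then show ?thesis by simp
    qed
    then show ?thesis using bN diag[OF j(1)] by simp
  qed
qed


lemma bil_T_e:
  assumes "Suc m \<le> k"
  shows "bil (\<Sum>i\<in>{1..m}. of_nat (N i) *s e i) (e (Suc m)) = (if m \<ge> 1 then - of_nat (N m) * cc / 2 else 0)"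
proof -
  have "bil (\<Sum>i\<in>{1..m}. of_nat (N i) *s e i) (e (Suc m)) = (\<Sum>i\<in>{1..m}. of_nat (N i) * bil (e i) (e (Suc m)))"
    by (simp add: bil_simps)
  also have "\<dots> = (\<Sum>i\<in>{1..m}. if i = m then - of_nat (N m) * cc / 2 else 0)"
  proof (rule sum.cong)
    fix i assume i: "i \<in> {1..m}"
    then have "i \<in> {1..k}" "Suc m \<in> {1..k}" using assms by auto
    then have "bil (e i) (e (Suc m)) = of_int (Cart i (Suc m)) * cc / 2" by (rule bil_ee)
    moreover have "Cart i (Suc m) = (if i = m then -1 else 0)" using i by (auto simp: Cart_def)
    ultimately show "of_nat (N i) * bil (e i) (e (Suc m)) = (if i = m then - of_nat (N m) * cc / 2 else 0)"
      by (cases "i = m") (simp_all add: field_simps)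
  qed simp
  also have "\<dots> = (if m \<ge> 1 then - of_nat (N m) * cc / 2 else 0)"
    by (simp only: sum.delta finite_atLeastAtMost) auto
  finally show ?thesis .
qed

lemma bil_T: "m \<le> k \<Longrightarrow> bil (\<Sum>i\<in>{1..m}. of_nat (N i) *s e i) (\<Sum>i\<in>{1..m}. of_nat (N i) *s e i) = of_real (c0 * Qf N m)"
proof (induction m)
  case 0 then show ?case by simp
next
  case (Suc m)
  let ?T = "\<Sum>i\<in>{1..m}. of_nat (N i) *s e i"
  let ?a = "of_nat (N (Suc m)) :: complex"
  have T: "(\<Sum>i\<in>{1..Suc m}. of_nat (N i) *s e i) = ?T + ?a *s e (Suc m)" by simp
  have ih: "bil ?T ?T = of_real (c0 * Qf N m)" using Suc by simp
  have te: "bil ?T (e (Suc m)) = (if m \<ge> 1 then - of_nat (N m) * cc / 2 else 0)" using bil_T_e Suc.prems .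
  have ee: "bil (e (Suc m)) (e (Suc m)) = cc" using diag Suc.prems by simp
  have "bil (?T + ?a *s e (Suc m)) (?T + ?a *s e (Suc m)) = bil ?T ?T + 2 * ?a * bil ?T (e (Suc m)) + ?a * ?a * bil (e (Suc m)) (e (Suc m))"
    unfolding bil_add_l bil_add_r bil_smult_l bil_smult_r bil_sym[of "e (Suc m)" ?T] by (simp add: algebra_simps)
  also have "\<dots> = of_real (c0 * Qf N (Suc m))"
    unfolding ih te ee cc_c0 by (auto simp: algebra_simps power2_eq_square)
  finally show ?case unfolding T .
qed

lemma theta_one:
  assumes "th \<in> R" "th = (\<Sum>i\<in>{1..k}. of_nat (N i) *s e i)" "\<forall>i\<in>{1..k}. N i \<ge> 1"
  shows "\<forall>i\<in>{1..k}. N i = 1"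
proof -
  have "bil th th = cc" using len[OF assms(1,2) refl] .
  moreover have "bil th th = of_real (c0 * Qf N k)" unfolding assms(2) by (rule bil_T) simp
  ultimately have "c0 * Qf N k = c0" unfolding cc_c0 by simp
  then have "Qf N k = 1" using c0_pos by simp
  then show ?thesis using Qf_one[OF k1 assms(3)] by blast
qed


primrec E :: "nat \<Rightarrow> complex^'n \<Rightarrow> complex^'n" where
  "E 0 = id"
| "E (Suc m) = E m \<circ> refl (e (Suc m))"

lemma refl_weyl: "a \<in> X \<Longrightarrow> refl a \<in> weyl X"
  using weyl_step[OF weyl_id, of a X] by simp

lemma E_weyl: "\<forall>i\<in>{1..k}. e i \<in> X \<Longrightarrow> m \<le> k \<Longrightarrow> E m \<in> weyl X"
proof (induction m)
  case 0 then show ?case using weyl_id[of X] by (simp add: id_def)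
next
  case (Suc m)
  have "e (Suc m) \<in> X" using Suc.prems by auto
  then have "refl (e (Suc m)) \<in> weyl X" by (rule refl_weyl)
  moreover have "E m \<in> weyl X" using Suc by simp
  ultimately show ?case unfolding E.simps by (rule weyl_comp[rotated])
qed

definition "rho m = (\<Sum>i\<in>{1..m}. e i)"

lemma E_e: "m \<le> k \<Longrightarrow> j \<in> {1..k} \<Longrightarrow>
  E m (e j) = (if j < m then e (Suc j) else if j = m then - rho m else if j = Suc m then rho (Suc m) else e j)"
proof (induction m arbitrary: j)
  case 0 then show ?case by (auto simp: rho_def)
next
  case (Suc m)
  have Ew: "E m \<in> weyl R" using E_weyl[of R m] eR Suc.prems by auto
  have sm: "Suc m \<in> {1..k}" using Suc.prems by auto
  have ih: "E m (e i) = (if i < m then e (Suc i) else if i = m then - rho m else if i = Suc m then rho (Suc m) else e i)"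
    if "i \<in> {1..k}" for i using Suc.IH[OF _ that] Suc.prems by simp
  have Esm: "E m (e (Suc m)) = rho (Suc m)" using ih[OF sm] by simp
  have "E (Suc m) (e j) = E m (e j - of_int (Cart (Suc m) j) *s e (Suc m))"
    using refl_ee[OF sm Suc.prems(2)] by simp
  also have "\<dots> = E m (e j) - of_int (Cart (Suc m) j) *s rho (Suc m)"
    by (simp add: weyl_diff[OF Ew] weyl_smult[OF Ew] Esm)
  finally have eq: "E (Suc m) (e j) = E m (e j) - of_int (Cart (Suc m) j) *s rho (Suc m)" .
  have rs: "rho (Suc m) = rho m + e (Suc m)" by (simp add: rho_def)
  have rss: "rho (Suc (Suc m)) = rho (Suc m) + e (Suc (Suc m))" by (simp add: rho_def)
  consider "j < m" | "j = m" | "j = Suc m" | "j = Suc (Suc m)" | "j > Suc (Suc m)" by linarith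
  then show ?case
  proof cases
    case 1 then show ?thesis using eq ih[OF Suc.prems(2)] by (simp add: Cart_def)
  next
    case 2 then show ?thesis using eq ih[OF Suc.prems(2)] Suc.prems(2) by (simp add: Cart_def rs)
  next
    case 3
    have "- rho (Suc m) = rho (Suc m) - 2 *s rho (Suc m)" by (simp add: vec_eq_iff)
    then show ?thesis using 3 eq ih[OF Suc.prems(2)] by (simp add: Cart_def)
  next
    case 4 then show ?thesis using eq ih[OF Suc.prems(2)] by (simp add: Cart_def rss add.commute)
  next
    case 5 then show ?thesis using eq ih[OF Suc.prems(2)] by (simp add: Cart_def)
  qed
qed

definition "sig = E k"
definition "al i = (if i = 0 then - rho k else e i)"

lemma sig_weyl: "\<forall>i\<in>{1..k}. e i \<in> X \<Longrightarrow> sig \<in> weyl X"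
  unfolding sig_def by (rule E_weyl) auto

lemma sig_e: "j \<in> {1..k} \<Longrightarrow> sig (e j) = (if j < k then e (Suc j) else - rho k)"
  unfolding sig_def using E_e[of k j] by auto

lemma sig_al: "i \<in> {0..k} \<Longrightarrow> sig (al i) = al (Suc i mod Suc k)"
proof -
  assume i: "i \<in> {0..k}"
  have sw: "sig \<in> weyl R" using sig_weyl eR by blast
  obtain k' where k': "k = Suc k'" using k1 by (cases k) auto
  show ?thesis
  proof (cases "i = 0")
    case True
    have "sig (rho k) = (\<Sum>j\<in>{1..k}. sig (e j))" unfolding rho_def by (rule weyl_sum[OF sw])
    also have "\<dots> = (\<Sum>j\<in>{1..k'}. e (Suc j)) - rho k"
      unfolding k' using sig_e k' by (simp add: sum.cl_ivl_Suc)
    finally have s1: "sig (rho k) = (\<Sum>j\<in>{1..k'}. e (Suc j)) - rho k" .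
    have "(\<Sum>j\<in>{1..k'}. e (Suc j)) = (\<Sum>j\<in>{Suc 1..Suc k'}. e j)"
      by (rule sum.shift_bounds_cl_Suc_ivl[symmetric])
    also have "\<dots> = (\<Sum>j\<in>{2..k}. e j)" unfolding k' by (simp add: numeral_2_eq_2)
    finally have s2: "(\<Sum>j\<in>{1..k'}. e (Suc j)) = (\<Sum>j\<in>{2..k}. e j)" .
    have s3: "rho k = e 1 + (\<Sum>j\<in>{2..k}. e j)"
      unfolding rho_def k' by (simp add: sum.atLeast_Suc_atMost numeral_2_eq_2)
    have s4: "(\<Sum>j\<in>{2..k}. e j) - rho k = - e 1" by (simp add: s3)
    have "sig (rho k) = - e 1" using s1 s2 s4 by simp
    then show ?thesis using True k1 by (simp add: al_def weyl_neg[OF sw])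
  next
    case False
    then have "i \<in> {1..k}" using i by auto
    then show ?thesis using False i by (auto simp: al_def sig_e)
  qed
qed

lemma sigpow_al: "i \<in> {0..k} \<Longrightarrow> (sig ^^ p) (al i) = al ((i + p) mod Suc k)"
proof (induction p)
  case 0 then show ?case by simp
next
  case (Suc p)
  have "(i + p) mod Suc k \<in> {0..k}" by (simp add: less_Suc_eq_le)
  then have "sig (al ((i + p) mod Suc k)) = al (Suc ((i + p) mod Suc k) mod Suc k)" by (rule sig_al)
  then show ?case using Suc by (simp add: mod_Suc_eq)
qed

lemma mod_img: "P \<in> {1..k} \<Longrightarrow> (\<lambda>i. (i + P) mod Suc k) ` {1..k} = {0..k} - {P}"
proof
  assume P: "P \<in> {1..k}"
  show "(\<lambda>i. (i + P) mod Suc k) ` {1..k} \<subseteq> {0..k} - {P}"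
  proof clarify
    fix i assume i: "i \<in> {1..k}"
    show "(i + P) mod Suc k \<in> {0..k} - {P}"
    proof
      show "(i + P) mod Suc k \<in> {0..k}" by (simp add: less_Suc_eq_le)
      show "(i + P) mod Suc k \<notin> {P}"
      proof
        assume "(i + P) mod Suc k \<in> {P}"
        then have m: "(i + P) mod Suc k = P" by simp
        show False
        proof (cases "i + P < Suc k")
          case True then show ?thesis using m i by simp
        next
          case False
          then have "(i + P) mod Suc k = (i + P - Suc k) mod Suc k" by (simp add: le_mod_geq)
          also have "\<dots> = i + P - Suc k" using i P by (auto intro!: mod_less)
          finally have "P = i + P - Suc k" using m by simp
          moreover have "i \<le> k" using i by simp
          ultimately show ?thesis using False by linarith
        qed
      qed
    qed
  qed
  show "{0..k} - {P} \<subseteq> (\<lambda>i. (i + P) mod Suc k) ` {1..k}"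
  proof
    fix x assume x: "x \<in> {0..k} - {P}"
    show "x \<in> (\<lambda>i. (i + P) mod Suc k) ` {1..k}"
    proof (cases "x > P")
      case True
      then have "x - P \<in> {1..k}" "(x - P + P) mod Suc k = x" using x by auto
      then show ?thesis by (metis image_eqI)
    next
      case False
      then have xP: "x < P" using x by auto
      have "x + Suc k - P \<in> {1..k}" using xP P by auto
      moreover have "(x + Suc k - P + P) mod Suc k = x"
      proof -
        have "x + Suc k - P + P = x + Suc k" using xP P by simp
        moreover have "(x + Suc k) mod Suc k = x mod Suc k" by (rule mod_add_self2)
        moreover have "x mod Suc k = x" using x by auto
        ultimately show ?thesis by simp
      qed
      ultimately show ?thesis by (metis image_eqI)
    qed
  qed
qed

lemma sigpow_S: "P \<in> {1..k} \<Longrightarrow> (sig ^^ P) ` S = insert (- rho k) (S - {e P})"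
proof -
  assume P: "P \<in> {1..k}"
  have "(sig ^^ P) ` S = (sig ^^ P) ` (al ` {1..k})" unfolding e_img[symmetric] by (auto simp: al_def)
  also have "\<dots> = al ` ((\<lambda>i. (i + P) mod Suc k) ` {1..k})"
    unfolding image_image by (rule image_cong) (auto simp: sigpow_al)
  also have "\<dots> = al ` ({0..k} - {P})" unfolding mod_img[OF P] ..
  also have "\<dots> = insert (- rho k) (e ` ({1..k} - {P}))"
  proof -
    have "{0..k} - {P} = insert 0 ({1..k} - {P})" using P by auto
    then show ?thesis by (auto simp: al_def)
  qed
  also have "e ` ({1..k} - {P}) = S - {e P}"
    using P e_img e_inj by (auto simp: inj_on_image_set_diff)
  finally show ?thesis .
qed

end


locale MT =
  fixes R D S0 :: "(complex^'n) set"
    and hb :: complex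
    and eta :: "complex^'n \<Rightarrow> complex"
    and m :: nat and Rc :: "nat \<Rightarrow> (complex^'n) set" and r :: "nat \<Rightarrow> nat"
    and u w :: "complex^'n \<Rightarrow> complex^'n" and lam :: "complex^'n"
    and l :: nat and th :: "complex^'n" and n :: "complex^'n \<Rightarrow> nat"
    and xi :: "complex^'n \<Rightarrow> nat"
  assumes rs: "root_system R" and red: "reduced R" and irr: "irreducible_roots R"
    and base: "is_base R D"
    and hb: "\<forall>q::rat. hb \<noteq> complex_of_real pi * \<i> * of_rat q"
    and eta_inv: "\<forall>v\<in>weyl R. \<forall>a\<in>R. eta (v a) = eta a"
    and S0: "S0 \<subseteq> D"
    and comps: "irred_components (vec.span S0 \<inter> R) m Rc"
    and u: "u \<in> weyl R" and lam_dom: "lam \<in> dominant R D" and ulam: "u lam \<in> antidominant R D"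
    and uhat: "\<forall>a\<in>pos_roots R D. aff_act hb u (- lam) (a, 0) \<in> Rhat_plus R D hb"
    and l: "l \<in> {1..m}"
    and typeA: "type_A (S0 \<inter> Rc l) (card (S0 \<inter> Rc l))"
    and th: "highest_root (Rc l) (S0 \<inter> Rc l) th"
    and n: "th = (\<Sum>a\<in>S0 \<inter> Rc l. of_nat (n a) *s a)"
    and h: "eta th + (\<Sum>a\<in>S0 \<inter> Rc l. of_nat (n a) * eta a) = (of_nat (r l) + 1) * hb"
    and w: "w \<in> weyl R"
    and xi: "xi \<in> Xi R D S0 m Rc r w"
    and m0: "real (\<Sum>a\<in>w ` (S0 \<inter> Rc l). xi a) + Re (bil (w th) lam) \<le> real (r l) + 1"
    and mj: "\<forall>a\<in>S0 \<inter> Rc l. real (xi (w a)) + Re (bil (w a) lam) \<ge> 0"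
begin

abbreviation "S \<equiv> S0 \<inter> Rc l"

lemma hb_nz: "hb \<noteq> 0" using hb[rule_format, of 0] by simp
lemma goodR: "a \<in> R \<Longrightarrow> bil a a \<noteq> 0" by (rule rs_good[OF rs])
lemma RcR: "Rc l \<subseteq> R" using comps l unfolding irred_components_def by blast
lemma SR: "S \<subseteq> R" using RcR by blast
lemma DR: "D \<subseteq> R" using base unfolding is_base_def by blast
lemma indD: "vec.independent D" using base unfolding is_base_def by blast
lemma finD: "finite D" by (rule vec.independent_explicit[THEN iffD1, THEN conjunct1, OF indD])
lemma finS: "finite S" using finD S0 finite_subset by blast
lemma thR: "th \<in> R" using th RcR unfolding highest_root_def by blast
lemma wR: "a \<in> R \<Longrightarrow> w a \<in> R" using weyl_closed[OF w] rs unfolding root_system_def by blast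
lemma uR: "a \<in> R \<Longrightarrow> u a \<in> R" using weyl_closed[OF u] rs unfolding root_system_def by blast
lemma w_bil: "bil (w x) (w y) = bil x y" using weyl_bil[OF w] goodR by blast
lemma u_bil: "bil (u x) (u y) = bil x y" using weyl_bil[OF u] goodR by blast
lemma w_bij: "bij w" using weyl_bij[OF w] goodR by blast
lemma u_bij: "bij u" using weyl_bij[OF u] goodR by blast

lemma S_ne: "S \<noteq> {}"
proof
  assume "S = {}"
  then have "th = 0" using n by simp
  then show False using thR rs unfolding root_system_def by simp
qed

lemma k1: "card S \<ge> 1" using S_ne finS by (simp add: Suc_le_eq card_gt_0_iff)


abbreviation "kk \<equiv> card S"

definition "ee = (SOME e. bij_betw e {1..kk} S \<and>
     (\<forall>i\<in>{1..kk}. \<forall>j\<in>{1..kk}. 2 * bil (e i) (e j) / bil (e j) (e j) =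
        (if i = j then 2 else if i = j + 1 \<or> j = i + 1 then -1 else 0)))"

lemma ee_props: "bij_betw ee {1..kk} S \<and>
     (\<forall>i\<in>{1..kk}. \<forall>j\<in>{1..kk}. 2 * bil (ee i) (ee j) / bil (ee j) (ee j) =
        (if i = j then 2 else if i = j + 1 \<or> j = i + 1 then -1 else 0))"
  unfolding ee_def by (rule someI_ex[OF typeA[unfolded type_A_def]])

sublocale T: tA R D S ee kk
proof unfold_locales
  show "root_system R" by (rule rs)
  show "reduced R" by (rule red)
  show "is_base R D" by (rule base)
  show "S \<subseteq> D" using S0 by blast
  show "bij_betw ee {1..kk} S" using ee_props by blast
  show "1 \<le> kk" by (rule k1)
  show "\<forall>i\<in>{1..kk}. \<forall>j\<in>{1..kk}. 2 * bil (ee i) (ee j) / bil (ee j) (ee j) =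
        (if i = j then 2 else if i = j + 1 \<or> j = i + 1 then -1 else 0)" using ee_props by blast
qed

definition "NN i = n (ee i)"

lemma th_sum: "th = (\<Sum>i\<in>{1..kk}. of_nat (NN i) *s ee i)"
  unfolding n T.reindex NN_def ..

lemma ee_Rc: "i \<in> {1..kk} \<Longrightarrow> ee i \<in> Rc l" using T.eS by blast

lemma NN_ge1: "j \<in> {1..kk} \<Longrightarrow> NN j \<ge> 1"
proof -
  assume j: "j \<in> {1..kk}"
  obtain c :: "complex^'n \<Rightarrow> nat" where c: "th - ee j = (\<Sum>a\<in>S. of_nat (c a) *s a)"
    using th ee_Rc[OF j] unfolding highest_root_def by blast
  have ej: "ee j = (\<Sum>i\<in>{1..kk}. (if i = j then 1 else 0) *s ee i)"
  proof -
    have "(\<Sum>i\<in>{1..kk}. (if i = j then (1::complex) else 0) *s ee i) = (\<Sum>i\<in>{1..kk}. if i = j then ee i else 0)"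
      by (rule sum.cong) auto
    also have "\<dots> = ee j" using j by (simp only: sum.delta finite_atLeastAtMost if_True)
    finally show ?thesis by simp
  qed
  have "(\<Sum>i\<in>{1..kk}. (of_nat (NN i) - (if i = j then 1 else 0)) *s ee i) = (\<Sum>i\<in>{1..kk}. of_nat (c (ee i)) *s ee i)"
  proof -
    have "(\<Sum>i\<in>{1..kk}. (of_nat (NN i) - (if i = j then 1 else 0)) *s ee i) = th - ee j"
      by (subst ej, subst th_sum) (simp add: vector_sub_rdistrib sum_subtractf)
    then show ?thesis using c T.reindex by simp
  qed
  from T.indep_idx[OF this j] have "of_nat (NN j) - 1 = (of_nat (c (ee j)) :: complex)" by simp
  then have "of_nat (NN j) = (of_nat (c (ee j) + 1) :: complex)" by (simp add: algebra_simps)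
  then have "NN j = c (ee j) + 1" using of_nat_eq_iff by blast
  then show ?thesis by simp
qed

lemma NN_1: "\<forall>i\<in>{1..kk}. NN i = 1"
  using T.theta_one[OF thR th_sum] NN_ge1 by blast

lemma th_rho: "th = T.rho kk"
  unfolding th_sum T.rho_def using NN_1 by (intro sum.cong) simp_all

lemma n1: "a \<in> S \<Longrightarrow> n a = 1"
proof -
  assume "a \<in> S"
  then obtain i where "i \<in> {1..kk}" "a = ee i" using T.e_img by blast
  then show ?thesis using NN_1 NN_def by simp
qed


definition "M a = floor (Re (bil (w a) lam))"
definition "xp a = int (xi (w a)) + M a"

lemma M: "a \<in> R \<Longrightarrow> bil (w a) lam = of_int (M a)"
proof -
  assume a: "a \<in> R"
  have "lam \<in> coweights R" using lam_dom unfolding dominant_def by blast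
  then have "bil (w a) lam \<in> \<int>" using wR[OF a] unfolding coweights_def by blast
  then obtain z where z: "bil (w a) lam = of_int z" by (metis Ints_cases)
  then show ?thesis unfolding M_def by simp
qed

lemma xp_nn: "a \<in> S \<Longrightarrow> xp a \<ge> 0"
proof -
  assume a: "a \<in> S"
  then have "real (xi (w a)) + Re (bil (w a) lam) \<ge> 0" using mj by blast
  then show ?thesis unfolding xp_def M[OF subsetD[OF SR a]] by simp
qed

lemma eta_w: "a \<in> R \<Longrightarrow> eta (w a) = eta a" using eta_inv w by blast
lemma eta_uw: "a \<in> R \<Longrightarrow> eta (u (w a)) = eta a" using eta_inv u w wR by metis

lemma image_eq: "act_V hb u (- lam) ` Hyp eta hb (w ` S) xi
   = {y. \<forall>a\<in>S. bil (u (w a)) y = eta a - hb * of_int (xp a)}"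
proof (intro equalityI subsetI)
  fix y assume "y \<in> act_V hb u (- lam) ` Hyp eta hb (w ` S) xi"
  then obtain x where x: "x \<in> Hyp eta hb (w ` S) xi" and y: "y = u (x + hb *s (- lam))"
    unfolding act_V_def by blast
  show "y \<in> {y. \<forall>a\<in>S. bil (u (w a)) y = eta a - hb * of_int (xp a)}"
  proof (intro CollectI ballI)
    fix a assume a: "a \<in> S"
    have aR: "a \<in> R" using a SR by blast
    have "bil (u (w a)) y = bil (w a) (x + hb *s (- lam))" unfolding y u_bil ..
    also have "\<dots> = bil (w a) x - hb * bil (w a) lam" by (simp add: bil_simps)
    also have "bil (w a) x = eta (w a) - hb * of_nat (xi (w a))" using x a unfolding Hyp_def by blast
    finally show "bil (u (w a)) y = eta a - hb * of_int (xp a)"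
      unfolding eta_w[OF aR] M[OF aR] xp_def by (simp add: algebra_simps)
  qed
next
  fix y assume y: "y \<in> {y. \<forall>a\<in>S. bil (u (w a)) y = eta a - hb * of_int (xp a)}"
  obtain x0 where x0: "u x0 = y" using u_bij by (metis bij_pointE)
  define x where "x = x0 + hb *s lam"
  have "act_V hb u (- lam) x = y" unfolding act_V_def x_def using x0
    by (simp add: vector_smult_rneg)
  moreover have "x \<in> Hyp eta hb (w ` S) xi"
    unfolding Hyp_def
  proof (intro CollectI ballI)
    fix b assume "b \<in> w ` S"
    then obtain a where a: "a \<in> S" and b: "b = w a" by blast
    have aR: "a \<in> R" using a SR by blast
    have "bil (w a) x = bil (w a) x0 + hb * bil (w a) lam" unfolding x_def by (simp add: bil_simps)
    also have "bil (w a) x0 = bil (u (w a)) y" unfolding x0[symmetric] u_bil ..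
    also have "\<dots> = eta a - hb * of_int (xp a)" using y a by blast
    finally show "bil b x = eta b - hb * of_nat (xi b)"
      unfolding b eta_w[OF aR] M[OF aR] xp_def by (simp add: algebra_simps)
  qed
  ultimately show "y \<in> act_V hb u (- lam) ` Hyp eta hb (w ` S) xi" by blast
qed


lemma posP: "a \<in> S \<Longrightarrow> xp a = 0 \<Longrightarrow> u (w a) \<in> pos_roots R D"
proof -
  assume a: "a \<in> S" and z: "xp a = 0"
  have aR: "a \<in> R" using a SR by blast
  show ?thesis
  proof (cases "xi (w a) = 0")
    case True
    then have M0: "M a = 0" using z unfolding xp_def by simp
    have "w a \<in> w ` S0" using a by blast
    then have wp: "w a \<in> pos_roots R D" using xi True unfolding Xi_def by blast
    have "aff_act hb u (- lam) (w a, 0) = (u (w a), 0)"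
      unfolding aff_act_def using M[OF aR] M0 by (simp add: bil_simps)
    then have "(u (w a), 0) \<in> Rhat_plus R D hb" using uhat wp by metis
    then show ?thesis using hb_nz unfolding Rhat_plus_def by auto
  next
    case False
    then have Mn: "M a < 0" using z unfolding xp_def by simp
    show ?thesis
    proof (rule ccontr)
      assume np: "u (w a) \<notin> pos_roots R D"
      have "- u (w a) \<in> pos_roots R D" by (rule not_pos_neg[OF rs base uR[OF wR[OF aR]] np])
      then have "Re (bil (- u (w a)) (u lam)) \<le> 0" using ulam unfolding antidominant_def by blast
      moreover have "bil (- u (w a)) (u lam) = - of_int (M a)" unfolding bil_neg_l u_bil M[OF aR] ..
      ultimately show False using Mn by simp
    qed
  qed
qed

lemma th_S: "th = (\<Sum>a\<in>S. a)"
  unfolding n by (rule sum.cong) (simp_all add: n1)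

lemma w_inj: "inj w" using w_bij bij_def by blast
lemma u_inj: "inj u" using u_bij bij_def by blast

lemma sM: "bil (w th) lam = of_int (\<Sum>a\<in>S. M a)"
proof -
  have "bil (w th) lam = (\<Sum>a\<in>S. bil (w a) lam)"
    by (subst th_S) (simp add: weyl_sum[OF w] bil_sum_l)
  also have "\<dots> = (\<Sum>a\<in>S. of_int (M a))" by (rule sum.cong) (use SR M in auto)
  finally show ?thesis by simp
qed

lemma sxi: "(\<Sum>b\<in>w ` S. xi b) = (\<Sum>a\<in>S. xi (w a))"
  by (rule sum.reindex[unfolded comp_def]) (meson inj_on_subset subset_UNIV w_inj)

lemma sxi_le: "(\<Sum>a\<in>S. xi (w a)) \<le> r l"
  using xi l unfolding Xi_def sxi[symmetric] by blast

lemma sxp: "(\<Sum>a\<in>S. xp a) = int (\<Sum>a\<in>S. xi (w a)) + (\<Sum>a\<in>S. M a)"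
  unfolding xp_def sum.distrib of_nat_sum ..

lemma sxp_le: "(\<Sum>a\<in>S. xp a) \<le> int (r l) + 1"
proof -
  have "real (\<Sum>a\<in>S. xi (w a)) + real_of_int (\<Sum>a\<in>S. M a) \<le> real (r l) + 1"
    using m0 unfolding sxi sM by simp
  then show ?thesis unfolding sxp by linarith
qed


definition "g = inv (u \<circ> w)"
lemma uw_inj: "inj (u \<circ> w)" using u_inj w_inj inj_compose by blast
lemma g_uw: "g (u (w a)) = a" unfolding g_def using uw_inj by (metis comp_apply inv_f_f)

lemma hyp_uw: "Hyp eta hb ((u \<circ> w) ` A) (\<lambda>b. nat (xp (g b))) = {y. \<forall>a\<in>A. bil (u (w a)) y = eta a - hb * of_int (xp a)}"
  if "A \<subseteq> S" for A
proof -
  have "bil (u (w a)) y = eta (u (w a)) - hb * of_nat (nat (xp (g (u (w a))))) \<longleftrightarrow>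
        bil (u (w a)) y = eta a - hb * of_int (xp a)" if "a \<in> A" for a y
  proof -
    have "a \<in> S" using that \<open>A \<subseteq> S\<close> by blast
    then have "a \<in> R" "xp a \<ge> 0" using SR xp_nn by auto
    then show ?thesis unfolding g_uw eta_uw[OF \<open>a \<in> R\<close>] by simp
  qed
  then show ?thesis unfolding Hyp_def by auto
qed

lemma case1:
  assumes le: "(\<Sum>a\<in>S. xp a) \<le> int (r l)"
  shows "\<exists>v\<in>weyl (Rc l). \<exists>xit :: complex^'n \<Rightarrow> nat.
           (\<Sum>a\<in>(u \<circ> w \<circ> v) ` S. xit a) \<le> r l \<and>
           {a \<in> (u \<circ> w \<circ> v) ` S. xit a = 0} \<subseteq> pos_roots R D \<and>
           act_V hb u (- lam) ` Hyp eta hb (w ` S) xi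
             = Hyp eta hb ((u \<circ> w \<circ> v) ` S) xit"
proof (intro bexI exI conjI)
  let ?xit = "\<lambda>b. nat (xp (g b))"
  have img: "(u \<circ> w \<circ> id) ` S = (u \<circ> w) ` S" by simp
  have "(\<Sum>b\<in>(u \<circ> w) ` S. ?xit b) = (\<Sum>a\<in>S. nat (xp a))"
    by (subst sum.reindex) (use uw_inj in \<open>auto simp: inj_on_def g_uw\<close>)
  moreover have "int (\<Sum>a\<in>S. nat (xp a)) = (\<Sum>a\<in>S. xp a)"
    unfolding of_nat_sum by (rule sum.cong) (use xp_nn in auto)
  ultimately show "(\<Sum>b\<in>(u \<circ> w \<circ> id) ` S. ?xit b) \<le> r l" using le unfolding img by linarith
  show "{b \<in> (u \<circ> w \<circ> id) ` S. ?xit b = 0} \<subseteq> pos_roots R D"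
  proof clarify
    fix a assume a: "a \<in> S0" "a \<in> Rc l" and z: "nat (xp (g ((u \<circ> w \<circ> id) a))) = 0"
    then have "xp a = 0" using xp_nn[of a] by (simp add: g_uw)
    then show "(u \<circ> w \<circ> id) a \<in> pos_roots R D" using posP a by simp
  qed
  show "act_V hb u (- lam) ` Hyp eta hb (w ` S) xi = Hyp eta hb ((u \<circ> w \<circ> id) ` S) ?xit"
    unfolding img image_eq hyp_uw[OF subset_refl] ..
  show "id \<in> weyl (Rc l)" by (rule weyl_id)
qed


lemma mth_R: "- th \<in> R" by (rule rs_neg[OF rs thR])

lemma mth_notin: "- th \<notin> S"
proof
  assume "- th \<in> S"
  then obtain j where j: "j \<in> {1..kk}" "- th = ee j" using T.e_img by blast
  have th1: "th = (\<Sum>i\<in>{1..kk}. (1::complex) *s ee i)" unfolding th_rho T.rho_def by simp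
  have "(\<Sum>i\<in>{1..kk}. (if i = j then (-1::complex) else 0) *s ee i) = (\<Sum>i\<in>{1..kk}. if i = j then - ee i else 0)"
    by (rule sum.cong) (auto simp: vector_smult_lneg)
  also have "\<dots> = - ee j" using j(1) by (simp only: sum.delta finite_atLeastAtMost if_True)
  also have "\<dots> = th" using j(2) by (metis minus_minus)
  finally have "(\<Sum>i\<in>{1..kk}. (1::complex) *s ee i) = (\<Sum>i\<in>{1..kk}. (if i = j then (-1::complex) else 0) *s ee i)"
    using th1 by simp
  from T.indep_idx[OF this j(1)] show False by simp
qed

lemma eta_th: "eta (u (w (- th))) = eta th"
proof -
  have r: "refl th th = - th" using refl_self goodR thR by metis
  have "eta (u (w (- th))) = eta (- th)" by (rule eta_uw[OF mth_R])
  also have "\<dots> = eta (refl th th)" unfolding r ..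
  also have "eta (refl th th) = eta th" using eta_inv T.refl_weyl[OF thR] thR by blast
  finally show ?thesis .
qed

lemma h': "eta th + (\<Sum>a\<in>S. eta a) = (of_nat (r l) + 1) * hb"
  using h by (simp add: n1)

lemma q_eq: "u (w (- th)) = - (\<Sum>a\<in>S. u (w a))"
  by (subst th_S) (simp add: weyl_neg[OF w] weyl_neg[OF u] weyl_sum[OF w] weyl_sum[OF u])

lemma hyp2:
  assumes a0: "a0 \<in> S" and tot: "(\<Sum>a\<in>S. xp a) = int (r l) + 1"
  shows "{y. bil (u (w (- th))) y = eta th \<and> (\<forall>a\<in>S - {a0}. bil (u (w a)) y = eta a - hb * of_int (xp a))}
       = {y. \<forall>a\<in>S. bil (u (w a)) y = eta a - hb * of_int (xp a)}"
proof -
  have bq: "bil (u (w (- th))) y = - (\<Sum>a\<in>S. bil (u (w a)) y)" for y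
    unfolding q_eq by (simp add: bil_simps)
  have spl: "(\<Sum>a\<in>S. F a) = F a0 + (\<Sum>a\<in>S - {a0}. F a)" for F :: "_ \<Rightarrow> complex"
    using sum.remove[OF finS a0] by blast
  have splz: "(\<Sum>a\<in>S. xp a) = xp a0 + (\<Sum>a\<in>S - {a0}. xp a)"
    using sum.remove[OF finS a0] by blast
  have tot': "(\<Sum>a\<in>S. (of_int (xp a) :: complex)) = of_nat (r l) + 1"
    unfolding of_int_sum[symmetric] tot by simp
  show ?thesis
  proof (intro equalityI subsetI CollectI)
    fix y assume y: "y \<in> {y. bil (u (w (- th))) y = eta th \<and> (\<forall>a\<in>S - {a0}. bil (u (w a)) y = eta a - hb * of_int (xp a))}"
    then have y1: "bil (u (w (- th))) y = eta th" and y2: "\<forall>a\<in>S - {a0}. bil (u (w a)) y = eta a - hb * of_int (xp a)" by auto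
    have s2: "(\<Sum>a\<in>S - {a0}. bil (u (w a)) y) = (\<Sum>a\<in>S - {a0}. eta a) - hb * (\<Sum>a\<in>S - {a0}. of_int (xp a))"
      using y2 by (simp add: sum_subtractf sum_distrib_left)
    have xs: "(of_int (xp a0) :: complex) + (\<Sum>a\<in>S - {a0}. of_int (xp a)) = of_nat (r l) + 1"
      using tot' spl by simp
    have es: "eta th + (eta a0 + (\<Sum>a\<in>S - {a0}. eta a)) = (of_nat (r l) + 1) * hb"
      using h' spl by simp
    have "bil (u (w a0)) y = eta a0 - hb * of_int (xp a0)"
    proof -
      have "eta th = - (bil (u (w a0)) y + (\<Sum>a\<in>S - {a0}. bil (u (w a)) y))"
        using y1 bq spl by simp
      then show ?thesis unfolding s2 using xs es by algebra
    qed
    then show "\<forall>a\<in>S. bil (u (w a)) y = eta a - hb * of_int (xp a)" using y2 by blast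
  next
    fix y assume y: "y \<in> {y. \<forall>a\<in>S. bil (u (w a)) y = eta a - hb * of_int (xp a)}"
    then have ya: "\<forall>a\<in>S. bil (u (w a)) y = eta a - hb * of_int (xp a)" by blast
    have "(\<Sum>a\<in>S. bil (u (w a)) y) = (\<Sum>a\<in>S. eta a) - hb * (\<Sum>a\<in>S. of_int (xp a))"
      using ya by (simp add: sum_subtractf sum_distrib_left)
    then have "bil (u (w (- th))) y = eta th" unfolding bq tot' using h' by algebra
    then show "bil (u (w (- th))) y = eta th \<and> (\<forall>a\<in>S - {a0}. bil (u (w a)) y = eta a - hb * of_int (xp a))"
      using ya by blast
  qed
qed


lemma q_pos: assumes tot: "(\<Sum>a\<in>S. xp a) = int (r l) + 1" shows "u (w (- th)) \<in> pos_roots R D"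
proof -
  have "(\<Sum>a\<in>S. M a) \<ge> 1" using tot sxp sxi_le by linarith
  moreover have "Re (of_int z :: complex) = real_of_int z" for z by simp
  ultimately have ge: "Re (bil (u (w th)) (u lam)) \<ge> 1" unfolding u_bil sM by (simp del: of_int_sum)
  have "u (w th) \<notin> pos_roots R D"
  proof
    assume "u (w th) \<in> pos_roots R D"
    then have "Re (bil (u (w th)) (u lam)) \<le> 0" using ulam unfolding antidominant_def by blast
    then show False using ge by simp
  qed
  from not_pos_neg[OF rs base uR[OF wR[OF thR]] this] show ?thesis
    by (simp add: weyl_neg[OF w] weyl_neg[OF u])
qed

lemma case2:
  assumes gt: "\<not> (\<Sum>a\<in>S. xp a) \<le> int (r l)"
  shows "\<exists>v\<in>weyl (Rc l). \<exists>xit :: complex^'n \<Rightarrow> nat.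
           (\<Sum>a\<in>(u \<circ> w \<circ> v) ` S. xit a) \<le> r l \<and>
           {a \<in> (u \<circ> w \<circ> v) ` S. xit a = 0} \<subseteq> pos_roots R D \<and>
           act_V hb u (- lam) ` Hyp eta hb (w ` S) xi
             = Hyp eta hb ((u \<circ> w \<circ> v) ` S) xit"
proof -
  have tot: "(\<Sum>a\<in>S. xp a) = int (r l) + 1" using gt sxp_le by linarith
  obtain a0 where a0: "a0 \<in> S" "xp a0 \<ge> 1"
  proof (rule ccontr)
    assume "\<not> thesis"
    then have "\<forall>a\<in>S. xp a = 0" using that xp_nn by force
    then have "(\<Sum>a\<in>S. xp a) = 0" by simp
    then show False using tot by simp
  qed
  obtain P where P: "P \<in> {1..kk}" "a0 = ee P" using a0(1) T.e_img by blast
  define v where "v = T.sig ^^ P"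
  have vW: "v \<in> weyl (Rc l)" unfolding v_def by (rule weyl_pow[OF T.sig_weyl]) (use ee_Rc in blast)
  have vS: "v ` S = insert (- th) (S - {a0})" unfolding v_def th_rho P(2) by (rule T.sigpow_S[OF P(1)])
  define q where "q = u (w (- th))"
  let ?B = "(u \<circ> w) ` (S - {a0})"
  have img: "(u \<circ> w \<circ> v) ` S = insert q ?B"
    unfolding image_comp[symmetric] vS q_def by simp
  have qB: "q \<notin> ?B"
  proof
    assume "q \<in> ?B"
    then obtain a where "a \<in> S - {a0}" "u (w (- th)) = u (w a)" unfolding q_def by auto
    then have "- th = a" using uw_inj by (metis comp_apply inj_eq)
    then show False using mth_notin \<open>a \<in> S - {a0}\<close> by blast
  qed
  define xit where "xit b = (if b = q then 0 else nat (xp (g b)))" for b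
  show ?thesis
  proof (intro bexI[OF _ vW] exI[of _ xit] conjI)
    have finB: "finite ?B" using finS by simp
    have "(\<Sum>b\<in>(u \<circ> w \<circ> v) ` S. xit b) = (\<Sum>b\<in>?B. xit b)"
      unfolding img using qB finB by (simp add: xit_def)
    also have "\<dots> = (\<Sum>b\<in>?B. nat (xp (g b)))" by (rule sum.cong) (use qB in \<open>auto simp: xit_def\<close>)
    also have "\<dots> = (\<Sum>a\<in>S - {a0}. nat (xp a))"
      by (subst sum.reindex) (use uw_inj in \<open>auto simp: inj_on_def g_uw\<close>)
    finally have s1: "(\<Sum>b\<in>(u \<circ> w \<circ> v) ` S. xit b) = (\<Sum>a\<in>S - {a0}. nat (xp a))" .
    have "int (\<Sum>a\<in>S - {a0}. nat (xp a)) = (\<Sum>a\<in>S - {a0}. xp a)"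
      unfolding of_nat_sum by (rule sum.cong) (use xp_nn in auto)
    moreover have "(\<Sum>a\<in>S. xp a) = xp a0 + (\<Sum>a\<in>S - {a0}. xp a)"
      using sum.remove[OF finS a0(1)] by blast
    ultimately show "(\<Sum>b\<in>(u \<circ> w \<circ> v) ` S. xit b) \<le> r l" unfolding s1 using tot a0(2) by linarith
    show "{b \<in> (u \<circ> w \<circ> v) ` S. xit b = 0} \<subseteq> pos_roots R D"
    proof
      fix b assume b: "b \<in> {b \<in> (u \<circ> w \<circ> v) ` S. xit b = 0}"
      show "b \<in> pos_roots R D"
      proof (cases "b = q")
        case True then show ?thesis using q_pos[OF tot] q_def by simp
      next
        case False
        then obtain a where a: "a \<in> S - {a0}" "b = u (w a)" using b img by auto
        then have "nat (xp a) = 0" using b False by (simp add: xit_def g_uw)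
        then have "xp a = 0" using xp_nn[of a] a by simp
        then show ?thesis using posP a by simp
      qed
    qed
    have "Hyp eta hb ((u \<circ> w \<circ> v) ` S) xit
        = {y. bil q y = eta th \<and> (\<forall>a\<in>S - {a0}. bil (u (w a)) y = eta a - hb * of_int (xp a))}"
    proof -
      have e1: "bil q y = eta q - hb * of_nat (xit q) \<longleftrightarrow> bil q y = eta th" for y
        by (simp add: xit_def q_def eta_th)
      have e2: "bil (u (w a)) y = eta (u (w a)) - hb * of_nat (xit (u (w a))) \<longleftrightarrow>
                bil (u (w a)) y = eta a - hb * of_int (xp a)" if "a \<in> S - {a0}" for a y
      proof -
        have "u (w a) \<noteq> q" using qB that by auto
        moreover have "a \<in> R" "xp a \<ge> 0" using that SR xp_nn by auto
        ultimately show ?thesis by (simp add: xit_def g_uw eta_uw)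
      qed
      show ?thesis unfolding img Hyp_def using e1 e2 by auto
    qed
    then show "act_V hb u (- lam) ` Hyp eta hb (w ` S) xi = Hyp eta hb ((u \<circ> w \<circ> v) ` S) xit"
      unfolding image_eq q_def hyp2[OF a0(1) tot] ..
  qed
qed

lemma main:
  shows "\<exists>v\<in>weyl (Rc l). \<exists>xit :: complex^'n \<Rightarrow> nat.
           (\<Sum>a\<in>(u \<circ> w \<circ> v) ` S. xit a) \<le> r l \<and>
           {a \<in> (u \<circ> w \<circ> v) ` S. xit a = 0} \<subseteq> pos_roots R D \<and>
           act_V hb u (- lam) ` Hyp eta hb (w ` S) xi
             = Hyp eta hb ((u \<circ> w \<circ> v) ` S) xit"
  using case1 case2 by blast

end
theorem mainTheorem11:
  fixes R D S0 :: "(complex^'n) set"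
    and hb :: complex
    and eta :: "complex^'n \<Rightarrow> complex"
    and m :: nat and Rc :: "nat \<Rightarrow> (complex^'n) set" and r :: "nat \<Rightarrow> nat"
    and u w :: "complex^'n \<Rightarrow> complex^'n" and lam :: "complex^'n"
    and l :: nat and th :: "complex^'n" and n :: "complex^'n \<Rightarrow> nat"
    and xi :: "complex^'n \<Rightarrow> nat"
  assumes rs: "root_system R" and red: "reduced R" and irr: "irreducible_roots R"
    and base: "is_base R D"
    and hb: "\<forall>q::rat. hb \<noteq> complex_of_real pi * \<i> * of_rat q"
    and eta_inv: "\<forall>v\<in>weyl R. \<forall>a\<in>R. eta (v a) = eta a"
    and S0: "S0 \<subseteq> D"
    and comps: "irred_components (vec.span S0 \<inter> R) m Rc"
    and u: "u \<in> weyl R" and lam_dom: "lam \<in> dominant R D" and ulam: "u lam \<in> antidominant R D"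
    and uhat: "\<forall>a\<in>pos_roots R D. aff_act hb u (- lam) (a, 0) \<in> Rhat_plus R D hb"
    and l: "l \<in> {1..m}"
    and typeA: "type_A (S0 \<inter> Rc l) (card (S0 \<inter> Rc l))"
    and th: "highest_root (Rc l) (S0 \<inter> Rc l) th"
    and n: "th = (\<Sum>a\<in>S0 \<inter> Rc l. of_nat (n a) *s a)"
    and h: "eta th + (\<Sum>a\<in>S0 \<inter> Rc l. of_nat (n a) * eta a) = (of_nat (r l) + 1) * hb"
    and w: "w \<in> weyl R"
    and xi: "xi \<in> Xi R D S0 m Rc r w"
    and m0: "real (\<Sum>a\<in>w ` (S0 \<inter> Rc l). xi a) + Re (bil (w th) lam) \<le> real (r l) + 1"
    and mj: "\<forall>a\<in>S0 \<inter> Rc l. real (xi (w a)) + Re (bil (w a) lam) \<ge> 0"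
  shows "\<exists>v\<in>weyl (Rc l). \<exists>xit :: complex^'n \<Rightarrow> nat.
           (\<Sum>a\<in>(u \<circ> w \<circ> v) ` (S0 \<inter> Rc l). xit a) \<le> r l \<and>
           {a \<in> (u \<circ> w \<circ> v) ` (S0 \<inter> Rc l). xit a = 0} \<subseteq> pos_roots R D \<and>
           act_V hb u (- lam) ` Hyp eta hb (w ` (S0 \<inter> Rc l)) xi
             = Hyp eta hb ((u \<circ> w \<circ> v) ` (S0 \<inter> Rc l)) xit"
  proof -
  interpret MT R D S0 hb eta m Rc r u w lam l th n xi
    by (unfold_locales; fact)
  show ?thesis by (rule main)
qed

end
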